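(* Let $k\ge 1$ and let $\mathscr{G}_k$ be a simple $\upsilon$-reduction grammar; let $\Phi_k$ denote the set of regular productions of $\mathscr{G}_k$ with left-hand side $G_k$. Then the generating function $G_k(z)$, whose coefficient $[z^n]G_k(z)$ is the number of $\lambda\upsilon$-terms of size $n$ which $\upsilon$-normalise in exactly $k$ normal-order reduction steps, admits the closed form $$G_k(z) = \frac{1}{1 - z - 2 z L_\infty(z)} \sum_{G_k \to \gamma \in \Phi_k} G_\gamma(z),$$ where for each such $\gamma$ $$G_\gamma(z) = z^{\zeta(\gamma)}\, T(z)^{\tau(\gamma)}\, S(z)^{\sigma(\gamma)}\, N(z)^{\nu(\gamma)} \prod_{0\le i<k} G_i(z)^{\rho_i(\gamma)}$$ for some non-negative integers $\zeta(\gamma),\tau(\gamma),\sigma(\gamma),\nu(\gamma),\rho_i(\gamma)$ depending on $\gamma$.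
   Context: $\lambda\upsilon$-terms (de Bruijn notation) are generated by: terms $t ::= \underline{n} \mid \lambda t \mid t\,t \mid t[s]$; substitutions $s ::= t/ \mid \Uparrow(s) \mid\ \uparrow$; indices $\underline{n} ::= \underline{0} \mid \mathtt{S}\,\underline{n}$. Pure terms are those without closures $\cdot[\cdot]$. The $\upsilon$-rewriting rules are: $(a b)[s] \to a[s](b[s])$; $(\lambda a)[s] \to \lambda(a[\Uparrow(s)])$; $\underline{0}[a/] \to a$; $(\mathtt{S}\,\underline{n})[a/] \to \underline{n}$; $\underline{0}[\Uparrow(s)] \to \underline{0}$; $(\mathtt{S}\,\underline{n})[\Uparrow(s)] \to \underline{n}[s][\uparrow]$; $\underline{n}[\uparrow] \to \mathtt{S}\,\underline{n}$. A term normalises in $k$ steps if leftmost-outermost $\upsilon$-reduction reaches a $\upsilon$-normal form in exactly $k$ steps. Size: $|\underline{n}| = n+1$, $|\lambda a| = 1+|a|$, $|ab| = 1+|a|+|b|$, $|a[s]| = 1+|a|+|s|$, $|a/| = 1+|a|$, $|\Uparrow(s)| = 1+|s|$, $|\uparrow| = 1$. Generating functions (by size): $T(z)$ of all $\lambda\upsilon$-terms, $S(z)$ of substitutions, $N(z)$ of indices, $L_\infty(z)$ of pure terms (equivalently, terms normalising in $0$ steps), and $G_i(z)$ of terms normalising in exactly $i$ steps. Regular tree grammars over the ranked alphabet $\mathscr{F}$ of $\lambda\upsilon$ symbols (application, closure binary; $\lambda$, $\cdot/$, $\Uparrow$, $\mathtt{S}$ unary; $\uparrow,\underline{0}$ constants):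 productions $X\to\alpha$ with $\alpha$ a term over $\mathscr{F}$ with non-terminals as variables; $L(\alpha)$ is the set of derivable ground terms; a non-terminal is unambiguous if each ground term has at most one derivation from it; a production $X\to\alpha$ is self-referencing if $X$ occurs in $\alpha$, regular otherwise. $\Lambda$ is the grammar with productions $T \to N \mid \lambda T \mid T T \mid T[S]$, $S \to T/ \mid \Uparrow(S) \mid \uparrow$, $N \to \underline{0} \mid \mathtt{S} N$. A $\upsilon$-reduction grammar $\mathscr{G}_k$ has axiom $G_k$, non-terminals $\{T,S,N,G_0,\dots,G_k\}$, contains all productions of $\Lambda$, each $G_j$ ($0\le j\le k$) is unambiguous and $L(G_j)$ is the set of terms normalising in exactly $j$ steps. It is simple if its self-referencing productions are productions of $\Lambda$ or of the form $G_j \to \lambda G_j \mid G_0 G_j \mid G_j G_0$, and each regular production $G_j\to\alpha$ has $\alpha$ using only non-terminals among $T,S,N,G_0,\dots,G_{j-1}$. *)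

theory Defs
  imports "HOL-Computational_Algebra.Formal_Power_Series"
begin

text \<open>Terms over the ranked alphabet F with variables of type 'v:
  application, closure (binary); lambda, slash (a/), lift (double up-arrow), successor S (unary);
  shift (up-arrow), zero (constants).  Ground terms are those without FV.\<close>

datatype 'v ftree =
    FV 'v
  | FApp "'v ftree" "'v ftree"
  | FClos "'v ftree" "'v ftree"
  | FLam "'v ftree"
  | FSlash "'v ftree"
  | FLift "'v ftree"
  | FS "'v ftree"
  | FShift
  | FZero

datatype nt = NT | NS | NN | NG nat

primrec fsize :: "'v ftree \<Rightarrow> nat" where
  "fsize (FV v) = 0"
| "fsize (FApp a b) = 1 + fsize a + fsize b"
| "fsize (FClos a s) = 1 + fsize a + fsize s"
| "fsize (FLam a) = 1 + fsize a"
| "fsize (FSlash a) = 1 + fsize a"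
| "fsize (FLift s) = 1 + fsize s"
| "fsize (FS n) = 1 + fsize n"
| "fsize FShift = 1"
| "fsize FZero = 1"

primrec fjoin :: "'a ftree ftree \<Rightarrow> 'a ftree" where
  "fjoin (FV t) = t"
| "fjoin (FApp a b) = FApp (fjoin a) (fjoin b)"
| "fjoin (FClos a s) = FClos (fjoin a) (fjoin s)"
| "fjoin (FLam a) = FLam (fjoin a)"
| "fjoin (FSlash a) = FSlash (fjoin a)"
| "fjoin (FLift s) = FLift (fjoin s)"
| "fjoin (FS n) = FS (fjoin n)"
| "fjoin FShift = FShift"
| "fjoin FZero = FZero"

text \<open>A derivation tree: the non-terminal X, the production right-hand side alpha used,
  and alpha with each non-terminal occurrence replaced by a derivation for it.\<close>
datatype drv = Drv nt "nt ftree" "drv ftree"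

primrec dnt :: "drv \<Rightarrow> nt" where
  "dnt (Drv X \<alpha> \<beta>) = X"

primrec yld :: "drv \<Rightarrow> nt ftree" where
  "yld (Drv X \<alpha> \<beta>) = fjoin (map_ftree yld \<beta>)"

inductive wfd :: "(nt \<times> nt ftree) set \<Rightarrow> drv \<Rightarrow> bool" for P where
  "(X, \<alpha>) \<in> P \<Longrightarrow> map_ftree dnt \<beta> = \<alpha> \<Longrightarrow> (\<forall>d\<in>set_ftree \<beta>. wfd P d)
     \<Longrightarrow> wfd P (Drv X \<alpha> \<beta>)"

definition lang :: "(nt \<times> nt ftree) set \<Rightarrow> nt \<Rightarrow> nt ftree set" where
  "lang P X = yld ` {d. wfd P d \<and> dnt d = X}"

definition unambiguous :: "(nt \<times> nt ftree) set \<Rightarrow> nt \<Rightarrow> bool" where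
  "unambiguous P X \<longleftrightarrow> inj_on yld {d. wfd P d \<and> dnt d = X}"

definition lang_pat :: "(nt \<times> nt ftree) set \<Rightarrow> nt ftree \<Rightarrow> nt ftree set" where
  "lang_pat P \<alpha> = {fjoin (map_ftree yld \<beta>) | \<beta>. map_ftree dnt \<beta> = \<alpha> \<and> (\<forall>d\<in>set_ftree \<beta>. wfd P d)}"

definition Lambda :: "(nt \<times> nt ftree) set" where
  "Lambda = {(NT, FV NN), (NT, FLam (FV NT)), (NT, FApp (FV NT) (FV NT)),
             (NT, FClos (FV NT) (FV NS)),
             (NS, FSlash (FV NT)), (NS, FLift (FV NS)), (NS, FShift),
             (NN, FZero), (NN, FS (FV NN))}"

definition lterms :: "nt ftree set" where
  "lterms = lang Lambda NT"

fun is_idx :: "'v ftree \<Rightarrow> bool" where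
  "is_idx FZero = True"
| "is_idx (FS n) = is_idx n"
| "is_idx _ = False"

fun root_step :: "'v ftree \<Rightarrow> 'v ftree option" where
  "root_step (FClos (FApp a b) s) = Some (FApp (FClos a s) (FClos b s))"
| "root_step (FClos (FLam a) s) = Some (FLam (FClos a (FLift s)))"
| "root_step (FClos FZero (FSlash a)) = Some a"
| "root_step (FClos (FS n) (FSlash a)) = Some n"
| "root_step (FClos FZero (FLift s)) = Some FZero"
| "root_step (FClos (FS n) (FLift s)) = Some (FClos (FClos n s) FShift)"
| "root_step (FClos n FShift) = (if is_idx n then Some (FS n) else None)"
| "root_step _ = None"

fun lo_step :: "'v ftree \<Rightarrow> 'v ftree option" where
  "lo_step (FApp a b) = (case lo_step a of Some a' \<Rightarrow> Some (FApp a' b)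
                          | None \<Rightarrow> map_option (FApp a) (lo_step b))"
| "lo_step (FClos a s) = (case root_step (FClos a s) of Some u \<Rightarrow> Some u
                          | None \<Rightarrow> (case lo_step a of Some a' \<Rightarrow> Some (FClos a' s)
                                     | None \<Rightarrow> map_option (FClos a) (lo_step s)))"
| "lo_step (FLam a) = map_option FLam (lo_step a)"
| "lo_step (FSlash a) = map_option FSlash (lo_step a)"
| "lo_step (FLift s) = map_option FLift (lo_step s)"
| "lo_step (FS n) = map_option FS (lo_step n)"
| "lo_step (FV v) = None"
| "lo_step FShift = None"
| "lo_step FZero = None"

fun nf_in :: "'v ftree \<Rightarrow> nat \<Rightarrow> bool" where
  "nf_in t 0 = (lo_step t = None)"
| "nf_in t (Suc k) = (case lo_step t of None \<Rightarrow> False | Some u \<Rightarrow> nf_in u k)"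

primrec pure :: "'v ftree \<Rightarrow> bool" where
  "pure (FV v) = True"
| "pure (FApp a b) = (pure a \<and> pure b)"
| "pure (FClos a s) = False"
| "pure (FLam a) = pure a"
| "pure (FSlash a) = pure a"
| "pure (FLift s) = pure s"
| "pure (FS n) = pure n"
| "pure FShift = True"
| "pure FZero = True"

definition gf :: "nt ftree set \<Rightarrow> real fps" where
  "gf A = Abs_fps (\<lambda>n. of_nat (card {t \<in> A. fsize t = n}))"

definition GfT :: "real fps" where "GfT = gf lterms"
definition GfS :: "real fps" where "GfS = gf (lang Lambda NS)"
definition GfN :: "real fps" where "GfN = gf (lang Lambda NN)"
definition Linf :: "real fps" where "Linf = gf {t \<in> lterms. pure t}"
definition Gi :: "nat \<Rightarrow> real fps" where "Gi i = gf {t \<in> lterms. nf_in t i}"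

definition nts :: "nat \<Rightarrow> nt set" where
  "nts k = {NT, NS, NN} \<union> NG ` {..k}"

definition upsilon_grammar :: "nat \<Rightarrow> (nt \<times> nt ftree) set \<Rightarrow> bool" where
  "upsilon_grammar k P \<longleftrightarrow>
     finite P \<and> Lambda \<subseteq> P \<and>
     (\<forall>(X, \<alpha>)\<in>P. X \<in> nts k \<and> set_ftree \<alpha> \<subseteq> nts k) \<and>
     (\<forall>(X, \<alpha>)\<in>P. X \<in> {NT, NS, NN} \<longrightarrow> (X, \<alpha>) \<in> Lambda) \<and>
     (\<forall>j\<le>k. unambiguous P (NG j) \<and> lang P (NG j) = {t \<in> lterms. nf_in t j})"

definition simple_grammar :: "nat \<Rightarrow> (nt \<times> nt ftree) set \<Rightarrow> bool" where
  "simple_grammar k P \<longleftrightarrow>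
     (\<forall>(X, \<alpha>)\<in>P.
        (X \<in> set_ftree \<alpha> \<longrightarrow>
           (X, \<alpha>) \<in> Lambda \<or>
           (\<exists>j. X = NG j \<and> \<alpha> \<in> {FLam (FV (NG j)), FApp (FV (NG 0)) (FV (NG j)),
                                   FApp (FV (NG j)) (FV (NG 0))})) \<and>
        (X \<notin> set_ftree \<alpha> \<longrightarrow>
           (\<forall>j. X = NG j \<longrightarrow> set_ftree \<alpha> \<subseteq> {NT, NS, NN} \<union> NG ` {..<j})))"

definition Phi :: "nat \<Rightarrow> (nt \<times> nt ftree) set \<Rightarrow> nt ftree set" where
  "Phi k P = {\<alpha>. (NG k, \<alpha>) \<in> P \<and> NG k \<notin> set_ftree \<alpha>}"

end

theory Submission
  imports Defs
begin


lemma map_ftree_eq_FV: "map_ftree f b = FV x \<longleftrightarrow> (\<exists>d. b = FV d \<and> f d = x)"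
  by (cases b) auto
lemma map_ftree_eq_FApp: "map_ftree f b = FApp x y \<longleftrightarrow> (\<exists>b1 b2. b = FApp b1 b2 \<and> map_ftree f b1 = x \<and> map_ftree f b2 = y)"
  by (cases b) auto
lemma map_ftree_eq_FClos: "map_ftree f b = FClos x y \<longleftrightarrow> (\<exists>b1 b2. b = FClos b1 b2 \<and> map_ftree f b1 = x \<and> map_ftree f b2 = y)"
  by (cases b) auto
lemma map_ftree_eq_FLam: "map_ftree f b = FLam x \<longleftrightarrow> (\<exists>b1. b = FLam b1 \<and> map_ftree f b1 = x)"
  by (cases b) auto
lemma map_ftree_eq_FSlash: "map_ftree f b = FSlash x \<longleftrightarrow> (\<exists>b1. b = FSlash b1 \<and> map_ftree f b1 = x)"
  by (cases b) auto
lemma map_ftree_eq_FLift: "map_ftree f b = FLift x \<longleftrightarrow> (\<exists>b1. b = FLift b1 \<and> map_ftree f b1 = x)"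
  by (cases b) auto
lemma map_ftree_eq_FS: "map_ftree f b = FS x \<longleftrightarrow> (\<exists>b1. b = FS b1 \<and> map_ftree f b1 = x)"
  by (cases b) auto
lemma map_ftree_eq_FShift: "map_ftree f b = FShift \<longleftrightarrow> b = FShift"
  by (cases b) auto
lemma map_ftree_eq_FZero: "map_ftree f b = FZero \<longleftrightarrow> b = FZero"
  by (cases b) auto

lemmas map_ftree_eqs = map_ftree_eq_FV map_ftree_eq_FApp map_ftree_eq_FClos map_ftree_eq_FLam
  map_ftree_eq_FSlash map_ftree_eq_FLift map_ftree_eq_FS map_ftree_eq_FShift map_ftree_eq_FZero

lemma lang_pat_FV: "lang_pat P (FV X) = lang P X"
  unfolding lang_pat_def lang_def apply (auto simp: map_ftree_eqs)
  apply (rule_tac x="FV xa" in exI) apply auto done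

lemma lang_pat_FApp: "x \<in> lang_pat P (FApp a b) \<longleftrightarrow> (\<exists>x1 x2. x = FApp x1 x2 \<and> x1 \<in> lang_pat P a \<and> x2 \<in> lang_pat P b)"
  unfolding lang_pat_def
  apply (rule iffI)
   apply (clarsimp simp: map_ftree_eqs) apply blast
  apply clarsimp
  apply (rule_tac x="FApp \<beta> \<beta>'" in exI) apply auto
  done
lemma lang_pat_FClos: "x \<in> lang_pat P (FClos a b) \<longleftrightarrow> (\<exists>x1 x2. x = FClos x1 x2 \<and> x1 \<in> lang_pat P a \<and> x2 \<in> lang_pat P b)"
  unfolding lang_pat_def
  apply (rule iffI)
   apply (clarsimp simp: map_ftree_eqs) apply blast
  apply clarsimp
  apply (rule_tac x="FClos \<beta> \<beta>'" in exI) apply auto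
  done
lemma lang_pat_FLam: "x \<in> lang_pat P (FLam a) \<longleftrightarrow> (\<exists>x1. x = FLam x1 \<and> x1 \<in> lang_pat P a)"
  unfolding lang_pat_def
  apply (rule iffI)
   apply (clarsimp simp: map_ftree_eqs) apply blast
  apply clarsimp
  apply (rule_tac x="FLam \<beta>" in exI) apply auto
  done
lemma lang_pat_FSlash: "x \<in> lang_pat P (FSlash a) \<longleftrightarrow> (\<exists>x1. x = FSlash x1 \<and> x1 \<in> lang_pat P a)"
  unfolding lang_pat_def
  apply (rule iffI)
   apply (clarsimp simp: map_ftree_eqs) apply blast
  apply clarsimp
  apply (rule_tac x="FSlash \<beta>" in exI) apply auto
  done
lemma lang_pat_FLift: "x \<in> lang_pat P (FLift a) \<longleftrightarrow> (\<exists>x1. x = FLift x1 \<and> x1 \<in> lang_pat P a)"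
  unfolding lang_pat_def
  apply (rule iffI)
   apply (clarsimp simp: map_ftree_eqs) apply blast
  apply clarsimp
  apply (rule_tac x="FLift \<beta>" in exI) apply auto
  done
lemma lang_pat_FS: "x \<in> lang_pat P (FS a) \<longleftrightarrow> (\<exists>x1. x = FS x1 \<and> x1 \<in> lang_pat P a)"
  unfolding lang_pat_def
  apply (rule iffI)
   apply (clarsimp simp: map_ftree_eqs) apply blast
  apply clarsimp
  apply (rule_tac x="FS \<beta>" in exI) apply auto
  done
lemma lang_pat_FShift: "lang_pat P FShift = {FShift}"
  unfolding lang_pat_def by (auto simp: map_ftree_eqs)
lemma lang_pat_FZero: "lang_pat P FZero = {FZero}"
  unfolding lang_pat_def by (auto simp: map_ftree_eqs)

lemma set_fjoin: "set_ftree (fjoin t) = \<Union> (set_ftree ` set_ftree t)"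
  by (induction t) auto

lemma yld_ground: "set_ftree (yld d) = {}"
  by (induction d) (auto simp: set_fjoin ftree.set_map)

lemma lang_pat_ground: "t \<in> lang_pat P a \<Longrightarrow> set_ftree t = {}"
  unfolding lang_pat_def by (auto simp: set_fjoin ftree.set_map yld_ground)

lemma lang_ground: "t \<in> lang P a \<Longrightarrow> set_ftree t = {}"
  unfolding lang_def by (auto simp: yld_ground)

lemma lang_union: "lang P X = (\<Union>\<alpha>\<in>{\<alpha>. (X, \<alpha>) \<in> P}. lang_pat P \<alpha>)"
proof (intro set_eqI iffI)
  fix t assume "t \<in> lang P X"
  then obtain d where d: "wfd P d" "dnt d = X" "t = yld d" by (auto simp: lang_def)
  from d(1) obtain Y \<alpha> \<beta> where e: "d = Drv Y \<alpha> \<beta>" "(Y,\<alpha>)\<in>P" "map_ftree dnt \<beta> = \<alpha>" "\<forall>d\<in>set_ftree \<beta>. wfd P d"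
    by (cases rule: wfd.cases) auto
  then show "t \<in> (\<Union>\<alpha>\<in>{\<alpha>. (X, \<alpha>) \<in> P}. lang_pat P \<alpha>)" using d unfolding lang_pat_def by auto
next
  fix t assume "t \<in> (\<Union>\<alpha>\<in>{\<alpha>. (X, \<alpha>) \<in> P}. lang_pat P \<alpha>)"
  then obtain \<alpha> \<beta> where e: "(X,\<alpha>)\<in>P" "map_ftree dnt \<beta> = \<alpha>" "\<forall>d\<in>set_ftree \<beta>. wfd P d" "t = fjoin (map_ftree yld \<beta>)"
    unfolding lang_pat_def by auto
  have w: "wfd P (Drv X \<alpha> \<beta>)" by (rule wfd.intros[OF e(1-3)])
  have "yld (Drv X \<alpha> \<beta>) \<in> lang P X" unfolding lang_def by (rule imageI) (simp add: w)
  then show "t \<in> lang P X" using e by simp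
qed



inductive isN :: "nt ftree \<Rightarrow> bool" where
  "isN FZero" | "isN n \<Longrightarrow> isN (FS n)"

inductive isT and isS where
  "isN n \<Longrightarrow> isT n"
| "isT a \<Longrightarrow> isT (FLam a)"
| "isT a \<Longrightarrow> isT b \<Longrightarrow> isT (FApp a b)"
| "isT a \<Longrightarrow> isS s \<Longrightarrow> isT (FClos a s)"
| "isT a \<Longrightarrow> isS (FSlash a)"
| "isS s \<Longrightarrow> isS (FLift s)"
| "isS FShift"

lemma wfd_Lambda_is:
  "wfd Lambda d \<Longrightarrow> (dnt d = NT \<longrightarrow> isT (yld d)) \<and> (dnt d = NS \<longrightarrow> isS (yld d)) \<and> (dnt d = NN \<longrightarrow> isN (yld d))"
proof (induction rule: wfd.induct)
  case (1 X \<alpha> \<beta>)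
  note IH = 1(3) and M = 1(2)
  from 1(1) consider "X = NT \<and> \<alpha> = FV NN" | "X = NT \<and> \<alpha> = FLam (FV NT)" | "X = NT \<and> \<alpha> = FApp (FV NT) (FV NT)" | "X = NT \<and> \<alpha> = FClos (FV NT) (FV NS)" | "X = NS \<and> \<alpha> = FSlash (FV NT)" | "X = NS \<and> \<alpha> = FLift (FV NS)" | "X = NS \<and> \<alpha> = FShift" | "X = NN \<and> \<alpha> = FZero" | "X = NN \<and> \<alpha> = FS (FV NN)"
    unfolding Lambda_def by blast
  then show ?case
  proof cases
    case 1
    then obtain d1 where B: "\<beta> = FV d1" "dnt d1 = NN" using M by (auto simp: map_ftree_eqs)
    then show ?thesis using IH 1 by (auto intro: isT_isS.intros isN.intros)
  next
    case 2
    then obtain d1 where B: "\<beta> = FLam (FV d1)" "dnt d1 = NT" using M by (auto simp: map_ftree_eqs)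
    then show ?thesis using IH 2 by (auto intro: isT_isS.intros isN.intros)
  next
    case 3
    then obtain d1 d2 where B: "\<beta> = FApp (FV d1) (FV d2)" "dnt d1 = NT" "dnt d2 = NT" using M by (auto simp: map_ftree_eqs)
    then show ?thesis using IH 3 by (auto intro: isT_isS.intros isN.intros)
  next
    case 4
    then obtain d1 d2 where B: "\<beta> = FClos (FV d1) (FV d2)" "dnt d1 = NT" "dnt d2 = NS" using M by (auto simp: map_ftree_eqs)
    then show ?thesis using IH 4 by (auto intro: isT_isS.intros isN.intros)
  next
    case 5
    then obtain d1 where B: "\<beta> = FSlash (FV d1)" "dnt d1 = NT" using M by (auto simp: map_ftree_eqs)
    then show ?thesis using IH 5 by (auto intro: isT_isS.intros isN.intros)
  next
    case 6
    then obtain d1 where B: "\<beta> = FLift (FV d1)" "dnt d1 = NS" using M by (auto simp: map_ftree_eqs)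
    then show ?thesis using IH 6 by (auto intro: isT_isS.intros isN.intros)
  next
    case 7
    then have B: "\<beta> = FShift" using M by (auto simp: map_ftree_eqs)
    then show ?thesis using IH 7 by (auto intro: isT_isS.intros isN.intros)
  next
    case 8
    then have B: "\<beta> = FZero" using M by (auto simp: map_ftree_eqs)
    then show ?thesis using IH 8 by (auto intro: isT_isS.intros isN.intros)
  next
    case 9
    then obtain d1 where B: "\<beta> = FS (FV d1)" "dnt d1 = NN" using M by (auto simp: map_ftree_eqs)
    then show ?thesis using IH 9 by (auto intro: isT_isS.intros isN.intros)
  qed
qed

lemma Lambda_mem: "(NT, FV NN) \<in> Lambda" "(NT, FLam (FV NT)) \<in> Lambda" "(NT, FApp (FV NT) (FV NT)) \<in> Lambda"
  "(NT, FClos (FV NT) (FV NS)) \<in> Lambda" "(NS, FSlash (FV NT)) \<in> Lambda" "(NS, FLift (FV NS)) \<in> Lambda"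
  "(NS, FShift) \<in> Lambda" "(NN, FZero) \<in> Lambda" "(NN, FS (FV NN)) \<in> Lambda"
  unfolding Lambda_def by simp_all

lemma mkD: "(X,\<alpha>) \<in> Lambda \<Longrightarrow> map_ftree dnt \<beta> = \<alpha> \<Longrightarrow> \<forall>d\<in>set_ftree \<beta>. wfd Lambda d
   \<Longrightarrow> \<exists>d. wfd Lambda d \<and> dnt d = X \<and> yld d = fjoin (map_ftree yld \<beta>)"
  by (rule exI[of _ "Drv X \<alpha> \<beta>"]) (auto intro: wfd.intros)

lemma isN_lang: "isN t \<Longrightarrow> \<exists>d. wfd Lambda d \<and> dnt d = NN \<and> yld d = t"
proof (induction rule: isN.induct)
  case 1
  show ?case
    by (rule exI[of _ "Drv NN FZero FZero"]) (auto simp: Lambda_def intro!: wfd.intros)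
next
  case (2 n)
  then obtain d where d: "wfd Lambda d" "dnt d = NN" "yld d = n" by blast
  show ?case using mkD[of NN "FS (FV NN)" "FS (FV d)"] d Lambda_mem by simp
qed

lemma isTS_lang:
  "(isT t \<longrightarrow> (\<exists>d. wfd Lambda d \<and> dnt d = NT \<and> yld d = t)) \<and>
   (isS s \<longrightarrow> (\<exists>d. wfd Lambda d \<and> dnt d = NS \<and> yld d = s))"
proof (induction rule: isT_isS.induct)
  case (1 n)
  then obtain d where d: "wfd Lambda d" "dnt d = NN" "yld d = n" using isN_lang by blast
  show ?case using mkD[of NT "FV NN" "FV d"] d Lambda_mem by simp
next
  case (2 a)
  then obtain d where d: "wfd Lambda d" "dnt d = NT" "yld d = a" by blast
  show ?case using mkD[of NT "FLam (FV NT)" "FLam (FV d)"] d Lambda_mem by simp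
next
  case (3 a b)
  then obtain d e where d: "wfd Lambda d" "dnt d = NT" "yld d = a" "wfd Lambda e" "dnt e = NT" "yld e = b" by blast
  show ?case using mkD[of NT "FApp (FV NT) (FV NT)" "FApp (FV d) (FV e)"] d Lambda_mem by simp
next
  case (4 a b)
  then obtain d e where d: "wfd Lambda d" "dnt d = NT" "yld d = a" "wfd Lambda e" "dnt e = NS" "yld e = b" by blast
  show ?case using mkD[of NT "FClos (FV NT) (FV NS)" "FClos (FV d) (FV e)"] d Lambda_mem by simp
next
  case (5 a)
  then obtain d where d: "wfd Lambda d" "dnt d = NT" "yld d = a" by blast
  show ?case using mkD[of NS "FSlash (FV NT)" "FSlash (FV d)"] d Lambda_mem by simp
next
  case (6 a)
  then obtain d where d: "wfd Lambda d" "dnt d = NS" "yld d = a" by blast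
  show ?case using mkD[of NS "FLift (FV NS)" "FLift (FV d)"] d Lambda_mem by simp
next
  case 7
  show ?case using mkD[of NS "FShift" "FShift"] Lambda_mem by simp
qed

lemma lang_Lambda_NT: "lang Lambda NT = {t. isT t}"
proof (intro set_eqI iffI)
  fix t assume "t \<in> lang Lambda NT"
  then obtain d where d: "wfd Lambda d" "dnt d = NT" "t = yld d" by (auto simp: lang_def)
  then show "t \<in> {t. isT t}" using wfd_Lambda_is[OF d(1)] by simp
next
  fix t assume "t \<in> {t. isT t}"
  then obtain d where "wfd Lambda d" "dnt d = NT" "yld d = t" using isTS_lang by blast
  then show "t \<in> lang Lambda NT" unfolding lang_def by auto
qed
lemma lang_Lambda_NS: "lang Lambda NS = {t. isS t}"
proof (intro set_eqI iffI)
  fix t assume "t \<in> lang Lambda NS"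
  then obtain d where d: "wfd Lambda d" "dnt d = NS" "t = yld d" by (auto simp: lang_def)
  then show "t \<in> {t. isS t}" using wfd_Lambda_is[OF d(1)] by simp
next
  fix t assume "t \<in> {t. isS t}"
  then obtain d where "wfd Lambda d" "dnt d = NS" "yld d = t" using isTS_lang by blast
  then show "t \<in> lang Lambda NS" unfolding lang_def by auto
qed
lemma lang_Lambda_NN: "lang Lambda NN = {t. isN t}"
proof (intro set_eqI iffI)
  fix t assume "t \<in> lang Lambda NN"
  then obtain d where d: "wfd Lambda d" "dnt d = NN" "t = yld d" by (auto simp: lang_def)
  then show "t \<in> {t. isN t}" using wfd_Lambda_is[OF d(1)] by simp
next
  fix t assume "t \<in> {t. isN t}"
  then obtain d where "wfd Lambda d" "dnt d = NN" "yld d = t" using isN_lang by blast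
  then show "t \<in> lang Lambda NN" unfolding lang_def by auto
qed
lemma lterms_iff: "t \<in> lterms \<longleftrightarrow> isT t"
  unfolding lterms_def lang_Lambda_NT by simp

lemma wfd_mono: "wfd P d \<Longrightarrow> P \<subseteq> Q \<Longrightarrow> wfd Q d"
  by (induction rule: wfd.induct) (auto intro!: wfd.intros)

lemma Lambda_vars: "(X,\<alpha>) \<in> Lambda \<Longrightarrow> X \<in> {NT,NS,NN} \<and> set_ftree \<alpha> \<subseteq> {NT,NS,NN}"
  unfolding Lambda_def by auto

lemma wfd_restrict: "wfd P d \<Longrightarrow> (\<forall>(X,\<alpha>)\<in>P. X \<in> {NT,NS,NN} \<longrightarrow> (X,\<alpha>) \<in> Lambda)
  \<Longrightarrow> dnt d \<in> {NT,NS,NN} \<Longrightarrow> wfd Lambda d"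
proof (induction rule: wfd.induct)
  case (1 X \<alpha> \<beta>)
  then have L: "(X,\<alpha>) \<in> Lambda" by auto
  have "\<forall>d\<in>set_ftree \<beta>. dnt d \<in> set_ftree \<alpha>" using 1(2) by (auto simp flip: 1(2) simp: ftree.set_map)
  then have "\<forall>d\<in>set_ftree \<beta>. dnt d \<in> {NT,NS,NN}" using Lambda_vars[OF L] by blast
  then show ?case using 1 L by (auto intro!: wfd.intros)
qed

lemma lang_P_Lambda: "Lambda \<subseteq> P \<Longrightarrow> (\<forall>(X,\<alpha>)\<in>P. X \<in> {NT,NS,NN} \<longrightarrow> (X,\<alpha>) \<in> Lambda)
  \<Longrightarrow> X \<in> {NT,NS,NN} \<Longrightarrow> lang P X = lang Lambda X"
proof -
  assume a: "Lambda \<subseteq> P" "\<forall>(X,\<alpha>)\<in>P. X \<in> {NT,NS,NN} \<longrightarrow> (X,\<alpha>) \<in> Lambda" "X \<in> {NT,NS,NN}"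
  have "{d. wfd P d \<and> dnt d = X} = {d. wfd Lambda d \<and> dnt d = X}"
  proof (intro set_eqI iffI)
    fix d assume "d \<in> {d. wfd P d \<and> dnt d = X}"
    then show "d \<in> {d. wfd Lambda d \<and> dnt d = X}" using wfd_restrict[OF _ a(2)] a(3) by auto
  next
    fix d assume "d \<in> {d. wfd Lambda d \<and> dnt d = X}"
    then show "d \<in> {d. wfd P d \<and> dnt d = X}" using wfd_mono[OF _ a(1)] by auto
  qed
  then show ?thesis unfolding lang_def by simp
qed



fun shf :: "nat \<Rightarrow> 'v ftree \<Rightarrow> 'v ftree" where
  "shf 0 n = n" | "shf (Suc k) n = FClos (shf k n) FShift"

lemma idx_pure: "is_idx n \<Longrightarrow> pure n"
  by (induction n) auto

lemma pure_lo: "pure t \<Longrightarrow> lo_step t = None"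
  by (induction t) auto

lemma lo_shf: "is_idx n \<Longrightarrow> lo_step (shf (Suc k) n) = Some (shf k (FS n))"
proof (induction k arbitrary: n)
  case 0
  then show ?case by (cases n) (auto simp: pure_lo idx_pure)
next
  case (Suc k)
  show ?case using Suc.IH[OF Suc.prems] by simp
qed

lemma nf_shf: "is_idx n \<Longrightarrow> nf_in (shf k n) k"
proof (induction k arbitrary: n)
  case 0
  then show ?case by (simp add: pure_lo idx_pure)
next
  case (Suc k)
  have "lo_step (shf (Suc k) n) = Some (shf k (FS n))" using lo_shf[OF Suc.prems] .
  then show ?case using Suc.IH[of "FS n"] Suc.prems by (simp only: nf_in.simps option.case) simp
qed

lemma nf_det: "nf_in t i \<Longrightarrow> nf_in t j \<Longrightarrow> i = j"
proof (induction i arbitrary: t j)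
  case 0
  then show ?case by (cases j) auto
next
  case (Suc i)
  then show ?case by (cases j) (auto split: option.splits)
qed

lemma nf_Lam: "nf_in (FLam t) k = nf_in t k"
  by (induction k arbitrary: t) (auto split: option.splits)

lemma nf_lams: "nf_in ((FLam ^^ m) t) k = nf_in t k"
  by (induction m) (auto simp: nf_Lam)

lemma nf_app_r: "lo_step a = None \<Longrightarrow> nf_in b k \<Longrightarrow> nf_in (FApp a b) k"
  by (induction k arbitrary: b) (auto split: option.splits)

lemma nf_app_l: "nf_in a k \<Longrightarrow> lo_step b = None \<Longrightarrow> nf_in (FApp a b) k"
  by (induction k arbitrary: a) (auto split: option.splits)

lemma pure_not_nf: "pure t \<Longrightarrow> 1 \<le> k \<Longrightarrow> nf_in t k \<Longrightarrow> False"
  by (cases k) (auto simp: pure_lo)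

lemma isT_shf: "isT (shf k FZero)"
  by (induction k) (auto intro: isT_isS.intros isN.intros)

lemma isT_lams: "isT t \<Longrightarrow> isT ((FLam ^^ m) t)"
  by (induction m) (auto intro: isT_isS.intros)

lemma isN_idx: "isN n \<Longrightarrow> is_idx n"
  by (induction rule: isN.induct) auto

lemma isT_shape: "isT a \<Longrightarrow> (\<exists>x. a = FLam x) \<or> (\<exists>x y. a = FApp x y) \<or> (\<exists>x y. a = FClos x y) \<or> is_idx a"
  by (erule isT.cases) (auto dest: isN_idx)

lemma isS_shape: "isS s \<Longrightarrow> (\<exists>x. s = FSlash x) \<or> (\<exists>x. s = FLift x) \<or> s = FShift"
  by (erule isS.cases) auto

lemma idx_shape: "is_idx a \<Longrightarrow> a = FZero \<or> (\<exists>x. a = FS x \<and> is_idx x)"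
  by (cases a) auto

lemma clos_step: "isT a \<Longrightarrow> isS s \<Longrightarrow> pure a \<Longrightarrow> root_step (FClos a s) \<noteq> None"
proof -
  assume a: "isT a" "isS s" "pure a"
  from isT_shape[OF a(1)] a(3) have A: "(\<exists>x. a = FLam x) \<or> (\<exists>x y. a = FApp x y) \<or> a = FZero \<or> (\<exists>x. a = FS x \<and> is_idx x)"
    using idx_shape by auto
  from isS_shape[OF a(2)] A show ?thesis by auto
qed

lemma isT_normal_aux: "(isT t \<longrightarrow> (\<not> pure t \<longrightarrow> lo_step t \<noteq> None)) \<and> (isS s \<longrightarrow> True)"
proof (induction rule: isT_isS.induct)
  case (1 n)
  then show ?case using isN_idx idx_pure by auto
next
  case (2 a)
  then show ?case by auto
next
  case (3 a b)
  then show ?case by (auto split: option.splits)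
next
  case (4 a s)
  show ?case
  proof (cases "root_step (FClos a s)")
    case None
    then have "pure a \<or> lo_step a \<noteq> None" using 4 by auto
    have ts: "isT a" "isS s" using 4 by auto
    show ?thesis using None clos_step[OF ts] \<open>pure a \<or> lo_step a \<noteq> None\<close> by (auto split: option.splits)
  qed (auto)
qed auto

lemma isT_normal: "isT t \<Longrightarrow> (lo_step t = None \<longleftrightarrow> pure t)"
  using isT_normal_aux pure_lo by blast

lemma Gi0_Linf: "Gi 0 = Linf"
proof -
  have "{t \<in> lterms. nf_in t 0} = {t \<in> lterms. pure t}"
    using isT_normal lterms_iff by auto
  then show ?thesis unfolding Gi_def Linf_def by simp
qed



definition gfin :: "nt ftree set \<Rightarrow> bool" where
  "gfin A \<longleftrightarrow> (\<forall>n. finite {t\<in>A. fsize t = n})"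

lemma finite_ground: "finite {t :: 'v ftree. set_ftree t = {} \<and> fsize t = n}"
proof (induction n rule: less_induct)
  case (less n)
  define G where "G = (\<lambda>m. {t :: 'v ftree. set_ftree t = {} \<and> fsize t = m})"
  have sub: "G n \<subseteq> {FShift, FZero} \<union> (\<Union>m\<in>{..<n}. FLam ` G m \<union> FSlash ` G m \<union> FLift ` G m \<union> FS ` G m)
     \<union> (\<Union>i\<in>{..<n}. \<Union>j\<in>{..<n}. (\<lambda>(x,y). FApp x y) ` (G i \<times> G j) \<union> (\<lambda>(x,y). FClos x y) ` (G i \<times> G j))"
  proof
    fix t assume t: "t \<in> G n"
    show "t \<in> {FShift, FZero} \<union> (\<Union>m\<in>{..<n}. FLam ` G m \<union> FSlash ` G m \<union> FLift ` G m \<union> FS ` G m)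
     \<union> (\<Union>i\<in>{..<n}. \<Union>j\<in>{..<n}. (\<lambda>(x,y). FApp x y) ` (G i \<times> G j) \<union> (\<lambda>(x,y). FClos x y) ` (G i \<times> G j))"
    proof (cases t)
      case (FApp a b)
      have ga: "a \<in> G (fsize a)" "b \<in> G (fsize b)" using t FApp unfolding G_def by simp_all
      have lt: "fsize a < n" "fsize b < n" using t FApp unfolding G_def by simp_all
      have im: "t \<in> (\<lambda>(x,y). FApp x y) ` (G (fsize a) \<times> G (fsize b))"
        unfolding FApp by (rule image_eqI[of _ _ "(a,b)"]) (simp_all add: ga)
      show ?thesis
        apply (rule UnI2)
        apply (rule UN_I[of "fsize a"], simp add: lt)
        apply (rule UN_I[of "fsize b"], simp add: lt)
        apply (rule UnI1)
        by (rule im)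
    next
      case (FClos a b)
      have ga: "a \<in> G (fsize a)" "b \<in> G (fsize b)" using t FClos unfolding G_def by simp_all
      have lt: "fsize a < n" "fsize b < n" using t FClos unfolding G_def by simp_all
      have im: "t \<in> (\<lambda>(x,y). FClos x y) ` (G (fsize a) \<times> G (fsize b))"
        unfolding FClos by (rule image_eqI[of _ _ "(a,b)"]) (simp_all add: ga)
      show ?thesis
        apply (rule UnI2)
        apply (rule UN_I[of "fsize a"], simp add: lt)
        apply (rule UN_I[of "fsize b"], simp add: lt)
        apply (rule UnI2)
        by (rule im)
    qed (use t in \<open>auto simp: G_def\<close>)
  qed
  have fin: "\<And>m. m < n \<Longrightarrow> finite (G m)" using less unfolding G_def by blast
  have "finite ({FShift, FZero} \<union> (\<Union>m\<in>{..<n}. FLam ` G m \<union> FSlash ` G m \<union> FLift ` G m \<union> FS ` G m)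
     \<union> (\<Union>i\<in>{..<n}. \<Union>j\<in>{..<n}. (\<lambda>(x,y). FApp x y) ` (G i \<times> G j) \<union> (\<lambda>(x,y). FClos x y) ` (G i \<times> G j)))"
    using fin by auto
  then show ?case using sub finite_subset unfolding G_def by blast
qed

lemma gfin_ground: "(\<And>t. t \<in> A \<Longrightarrow> set_ftree t = {}) \<Longrightarrow> gfin A"
  unfolding gfin_def
  by (auto intro: finite_subset[OF _ finite_ground])

lemma gf_nth: "fps_nth (gf A) n = of_nat (card {t\<in>A. fsize t = n})"
  by (simp add: gf_def)

lemma gf_union:
  assumes "finite I" "\<And>i j. i \<in> I \<Longrightarrow> j \<in> I \<Longrightarrow> i \<noteq> j \<Longrightarrow> A i \<inter> A j = {}"
    "\<And>i. i \<in> I \<Longrightarrow> gfin (A i)"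
  shows "gf (\<Union>i\<in>I. A i) = (\<Sum>i\<in>I. gf (A i))"
proof (rule fps_ext)
  fix n
  have eq: "{t \<in> (\<Union>i\<in>I. A i). fsize t = n} = (\<Union>i\<in>I. {t\<in>A i. fsize t = n})" by auto
  have c: "card (\<Union>i\<in>I. {t\<in>A i. fsize t = n}) = (\<Sum>i\<in>I. card {t\<in>A i. fsize t = n})"
    apply (rule card_UN_disjoint)
    using assms unfolding gfin_def by auto
  show "fps_nth (gf (\<Union>i\<in>I. A i)) n = fps_nth (\<Sum>i\<in>I. gf (A i)) n"
    unfolding gf_nth fps_sum_nth eq by (simp only: c of_nat_sum)
qed

lemma gf_unary:
  assumes sz: "\<And>x. fsize (c x) = Suc (fsize x)" and inj: "inj c"
  shows "gf (c ` A) = fps_X * gf A"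
proof (rule fps_ext)
  fix n
  show "fps_nth (gf (c ` A)) n = fps_nth (fps_X * gf A) n"
  proof (cases n)
    case 0
    have e: "{t \<in> c ` A. fsize t = n} = {}" using sz 0 by auto
    show ?thesis unfolding gf_nth e using 0 by simp
  next
    case (Suc m)
    have e: "{t \<in> c ` A. fsize t = n} = c ` {a\<in>A. fsize a = m}" using sz Suc by auto
    have e2: "card (c ` {a\<in>A. fsize a = m}) = card {a\<in>A. fsize a = m}"
      using inj by (simp add: card_image inj_on_subset)
    show ?thesis unfolding gf_nth e e2 using Suc by (simp add: gf_nth)
  qed
qed

lemma gf_binary:
  assumes sz: "\<And>x y. fsize (c x y) = Suc (fsize x + fsize y)"
    and inj: "\<And>x y x' y'. c x y = c x' y' \<Longrightarrow> x = x' \<and> y = y'"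
    and fA: "gfin A" and fB: "gfin B"
  shows "gf ((\<lambda>(x,y). c x y) ` (A \<times> B)) = fps_X * gf A * gf B"
proof (rule fps_ext)
  fix n
  show "fps_nth (gf ((\<lambda>(x,y). c x y) ` (A \<times> B))) n = fps_nth (fps_X * gf A * gf B) n"
  proof (cases n)
    case 0
    have e: "{t \<in> (\<lambda>(x,y). c x y) ` (A \<times> B). fsize t = n} = {}" using sz 0 by auto
    show ?thesis unfolding gf_nth e using 0 by simp
  next
    case (Suc m)
    define S where "S = (\<lambda>i. (\<lambda>(x,y). c x y) ` ({a\<in>A. fsize a = i} \<times> {b\<in>B. fsize b = m - i}))"
    have eq: "{t \<in> (\<lambda>(x,y). c x y) ` (A \<times> B). fsize t = n} = (\<Union>i\<in>{0..m}. S i)"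
    proof (intro set_eqI iffI)
      fix t assume "t \<in> {t \<in> (\<lambda>(x,y). c x y) ` (A \<times> B). fsize t = n}"
      then obtain x y where "t = c x y" "x \<in> A" "y \<in> B" "fsize x + fsize y = m" using sz Suc by auto
      then show "t \<in> (\<Union>i\<in>{0..m}. S i)" unfolding S_def
        by (intro UN_I[of "fsize x"]) (auto intro!: image_eqI[of _ _ "(x,y)"])
    next
      fix t assume "t \<in> (\<Union>i\<in>{0..m}. S i)"
      then show "t \<in> {t \<in> (\<lambda>(x,y). c x y) ` (A \<times> B). fsize t = n}" unfolding S_def using sz Suc by auto
    qed
    have inj2: "inj_on (\<lambda>(x,y). c x y) X" for X
      by (auto simp: inj_on_def dest: inj)
    have cS: "card (S i) = card {a\<in>A. fsize a = i} * card {b\<in>B. fsize b = m - i}" for i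
      unfolding S_def by (simp add: card_image[OF inj2] card_cartesian_product)
    have finS: "finite (S i)" for i
      unfolding S_def using fA fB unfolding gfin_def by auto
    have disj: "i \<in> {0..m} \<Longrightarrow> j \<in> {0..m} \<Longrightarrow> i \<noteq> j \<Longrightarrow> S i \<inter> S j = {}" for i j
      unfolding S_def by (auto dest: inj)
    have "card (\<Union>i\<in>{0..m}. S i) = (\<Sum>i=0..m. card (S i))"
      by (rule card_UN_disjoint) (use finS disj in auto)
    then have "fps_nth (gf ((\<lambda>(x,y). c x y) ` (A \<times> B))) n = (\<Sum>i=0..m. fps_nth (gf A) i * fps_nth (gf B) (m - i))"
      unfolding gf_nth eq by (simp add: cS)
    also have "\<dots> = fps_nth (fps_X * gf A * gf B) n"
      unfolding mult.assoc fps_X_mult_nth Suc by (simp add: fps_mult_nth)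
    finally show ?thesis .
  qed
qed

lemma gf_single: assumes "fsize x = 1" shows "gf {x} = fps_X"
proof (rule fps_ext)
  fix n
  have e: "{t\<in>{x}. fsize t = n} = (if n = 1 then {x} else {})" using assms by auto
  show "fps_nth (gf {x}) n = fps_nth fps_X n" unfolding gf_nth e by simp
qed



lemma lang_pat_FApp_eq: "lang_pat P (FApp a b) = (\<lambda>(x,y). FApp x y) ` (lang_pat P a \<times> lang_pat P b)"
  by (auto simp: lang_pat_FApp)
lemma lang_pat_FClos_eq: "lang_pat P (FClos a b) = (\<lambda>(x,y). FClos x y) ` (lang_pat P a \<times> lang_pat P b)"
  by (auto simp: lang_pat_FClos)
lemma lang_pat_FLam_eq: "lang_pat P (FLam a) = FLam ` lang_pat P a"
  by (auto simp: lang_pat_FLam)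
lemma lang_pat_FSlash_eq: "lang_pat P (FSlash a) = FSlash ` lang_pat P a"
  by (auto simp: lang_pat_FSlash)
lemma lang_pat_FLift_eq: "lang_pat P (FLift a) = FLift ` lang_pat P a"
  by (auto simp: lang_pat_FLift)
lemma lang_pat_FS_eq: "lang_pat P (FS a) = FS ` lang_pat P a"
  by (auto simp: lang_pat_FS)

primrec pgf :: "(nt \<Rightarrow> real fps) \<Rightarrow> nt ftree \<Rightarrow> real fps" where
  "pgf v (FV X) = v X"
| "pgf v (FApp a b) = fps_X * pgf v a * pgf v b"
| "pgf v (FClos a b) = fps_X * pgf v a * pgf v b"
| "pgf v (FLam a) = fps_X * pgf v a"
| "pgf v (FSlash a) = fps_X * pgf v a"
| "pgf v (FLift a) = fps_X * pgf v a"
| "pgf v (FS a) = fps_X * pgf v a"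
| "pgf v FShift = fps_X"
| "pgf v FZero = fps_X"

lemma gfin_lang_pat: "gfin (lang_pat P a)"
  by (rule gfin_ground) (rule lang_pat_ground)

lemma gf_lang_pat: "gf (lang_pat P \<alpha>) = pgf (\<lambda>X. gf (lang P X)) \<alpha>"
proof (induction \<alpha>)
  case (FV X) then show ?case by (simp add: lang_pat_FV)
next
  case (FApp a b)
  have "gf ((\<lambda>(x,y). FApp x y) ` (lang_pat P a \<times> lang_pat P b)) = fps_X * gf (lang_pat P a) * gf (lang_pat P b)"
    by (rule gf_binary) (auto simp: gfin_lang_pat)
  then show ?case using FApp by (simp add: lang_pat_FApp_eq)
next
  case (FClos a b)
  have "gf ((\<lambda>(x,y). FClos x y) ` (lang_pat P a \<times> lang_pat P b)) = fps_X * gf (lang_pat P a) * gf (lang_pat P b)"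
    by (rule gf_binary) (auto simp: gfin_lang_pat)
  then show ?case using FClos by (simp add: lang_pat_FClos_eq)
next
  case (FLam a)
  have "gf (FLam ` lang_pat P a) = fps_X * gf (lang_pat P a)"
    by (rule gf_unary) (auto simp: inj_def)
  then show ?case using FLam by (simp add: lang_pat_FLam_eq)
next
  case (FSlash a)
  have "gf (FSlash ` lang_pat P a) = fps_X * gf (lang_pat P a)"
    by (rule gf_unary) (auto simp: inj_def)
  then show ?case using FSlash by (simp add: lang_pat_FSlash_eq)
next
  case (FLift a)
  have "gf (FLift ` lang_pat P a) = fps_X * gf (lang_pat P a)"
    by (rule gf_unary) (auto simp: inj_def)
  then show ?case using FLift by (simp add: lang_pat_FLift_eq)
next
  case (FS a)
  have "gf (FS ` lang_pat P a) = fps_X * gf (lang_pat P a)"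
    by (rule gf_unary) (auto simp: inj_def)
  then show ?case using FS by (simp add: lang_pat_FS_eq)
next
  case FShift then show ?case by (simp add: lang_pat_FShift gf_single)
next
  case FZero then show ?case by (simp add: lang_pat_FZero gf_single)
qed

lemma pgf_mono:
  assumes "set_ftree \<alpha> \<subseteq> {NT, NS, NN} \<union> NG ` {..<k}"
    and vT: "v NT = T" and vS: "v NS = S" and vN: "v NN = N" and vG: "\<And>i. i < k \<Longrightarrow> v (NG i) = G i"
  shows "\<exists>\<zeta> \<tau> \<sigma> \<nu> (\<rho> :: nat \<Rightarrow> nat). pgf v \<alpha> = fps_X ^ \<zeta> * T ^ \<tau> * S ^ \<sigma> * N ^ \<nu> * (\<Prod>i<k. G i ^ \<rho> i)"
  using assms(1)
proof (induction \<alpha>)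
  case (FV X)
  then consider "X = NT" | "X = NS" | "X = NN" | i where "i < k" "X = NG i" by auto
  then show ?case
  proof cases
    case 1 then show ?thesis using vT by (intro exI[of _ 0] exI[of _ 1] exI[of _ "\<lambda>_. 0"]) simp
  next
    case 2 then show ?thesis using vS
      by (intro exI[of _ 0] exI[of _ 0] exI[of _ 1] exI[of _ 0] exI[of _ "\<lambda>_. 0"]) simp
  next
    case 3 then show ?thesis using vN
      by (intro exI[of _ 0] exI[of _ 0] exI[of _ 0] exI[of _ 1] exI[of _ "\<lambda>_. 0"]) simp
  next
    case (4 i)
    have "(\<Prod>j<k. G j ^ (if j = i then 1 else 0)) = (\<Prod>j<k. if j = i then G j else 1)"
      by (rule prod.cong) auto
    also have "\<dots> = G i" using 4 by (simp add: prod.delta)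
    finally show ?thesis using 4 vG
      by (intro exI[of _ 0] exI[of _ 0] exI[of _ 0] exI[of _ 0] exI[of _ "\<lambda>j. if j = i then 1 else 0"]) simp
  qed
next
  case (FApp a b)
  then obtain z1 t1 s1 n1 r1 z2 t2 s2 n2 r2 where
    "pgf v a = fps_X ^ z1 * T ^ t1 * S ^ s1 * N ^ n1 * (\<Prod>i<k. G i ^ r1 i)"
    "pgf v b = fps_X ^ z2 * T ^ t2 * S ^ s2 * N ^ n2 * (\<Prod>i<k. G i ^ r2 i)"
    by auto
  then show ?case
    by (intro exI[of _ "Suc (z1 + z2)"] exI[of _ "t1 + t2"] exI[of _ "s1 + s2"] exI[of _ "n1 + n2"]
        exI[of _ "\<lambda>i. r1 i + r2 i"]) (simp add: power_add prod.distrib mult_ac)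
next
  case (FClos a b)
  then obtain z1 t1 s1 n1 r1 z2 t2 s2 n2 r2 where
    "pgf v a = fps_X ^ z1 * T ^ t1 * S ^ s1 * N ^ n1 * (\<Prod>i<k. G i ^ r1 i)"
    "pgf v b = fps_X ^ z2 * T ^ t2 * S ^ s2 * N ^ n2 * (\<Prod>i<k. G i ^ r2 i)"
    by auto
  then show ?case
    by (intro exI[of _ "Suc (z1 + z2)"] exI[of _ "t1 + t2"] exI[of _ "s1 + s2"] exI[of _ "n1 + n2"]
        exI[of _ "\<lambda>i. r1 i + r2 i"]) (simp add: power_add prod.distrib mult_ac)
next
  case (FLam a)
  then obtain z1 t1 s1 n1 r1 where
    "pgf v a = fps_X ^ z1 * T ^ t1 * S ^ s1 * N ^ n1 * (\<Prod>i<k. G i ^ r1 i)" by auto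
  then show ?case
    by (intro exI[of _ "Suc z1"] exI[of _ t1] exI[of _ s1] exI[of _ n1] exI[of _ r1]) (simp add: mult_ac)
next
  case (FSlash a)
  then obtain z1 t1 s1 n1 r1 where
    "pgf v a = fps_X ^ z1 * T ^ t1 * S ^ s1 * N ^ n1 * (\<Prod>i<k. G i ^ r1 i)" by auto
  then show ?case
    by (intro exI[of _ "Suc z1"] exI[of _ t1] exI[of _ s1] exI[of _ n1] exI[of _ r1]) (simp add: mult_ac)
next
  case (FLift a)
  then obtain z1 t1 s1 n1 r1 where
    "pgf v a = fps_X ^ z1 * T ^ t1 * S ^ s1 * N ^ n1 * (\<Prod>i<k. G i ^ r1 i)" by auto
  then show ?case
    by (intro exI[of _ "Suc z1"] exI[of _ t1] exI[of _ s1] exI[of _ n1] exI[of _ r1]) (simp add: mult_ac)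
next
  case (FS a)
  then obtain z1 t1 s1 n1 r1 where
    "pgf v a = fps_X ^ z1 * T ^ t1 * S ^ s1 * N ^ n1 * (\<Prod>i<k. G i ^ r1 i)" by auto
  then show ?case
    by (intro exI[of _ "Suc z1"] exI[of _ t1] exI[of _ s1] exI[of _ n1] exI[of _ r1]) (simp add: mult_ac)
next
  case FShift
  then show ?case by (intro exI[of _ 1] exI[of _ 0] exI[of _ 0] exI[of _ 0] exI[of _ "\<lambda>_. 0"]) simp
next
  case FZero
  then show ?case by (intro exI[of _ 1] exI[of _ 0] exI[of _ 0] exI[of _ 0] exI[of _ "\<lambda>_. 0"]) simp
qed



lemma lams_Suc: "(FLam ^^ Suc m) c = FLam ((FLam ^^ m) c)"
  by simp

lemma lam_depth:
  "(FLam ^^ m) c \<in> lang_pat P \<alpha> \<Longrightarrow> fsize \<alpha> < m \<Longrightarrow>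
   \<exists>d X. \<alpha> = (FLam ^^ d) (FV X) \<and> d < m \<and> (FLam ^^ (m - d)) c \<in> lang P X"
proof (induction \<alpha> arbitrary: m)
  case (FV X)
  then show ?case by (intro exI[of _ 0] exI[of _ X]) (simp add: lang_pat_FV)
next
  case (FLam a)
  then obtain m' where m: "m = Suc m'" by (cases m) auto
  have "(FLam ^^ m') c \<in> lang_pat P a" using FLam.prems(1) unfolding m lams_Suc lang_pat_FLam by simp
  moreover have "fsize a < m'" using FLam.prems(2) m by simp
  ultimately obtain d X where "a = (FLam ^^ d) (FV X)" "d < m'" "(FLam ^^ (m' - d)) c \<in> lang P X"
    using FLam.IH by blast
  then show ?case using m by (intro exI[of _ "Suc d"] exI[of _ X]) simp
next
  case (FApp a b)
  then obtain m' where m: "m = Suc m'" by (cases m) auto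
  show ?case using FApp.prems(1) unfolding m lams_Suc lang_pat_FApp by simp
next
  case (FClos a b)
  then obtain m' where m: "m = Suc m'" by (cases m) auto
  show ?case using FClos.prems(1) unfolding m lams_Suc lang_pat_FClos by simp
next
  case (FSlash a)
  then obtain m' where m: "m = Suc m'" by (cases m) auto
  show ?case using FSlash.prems(1) unfolding m lams_Suc lang_pat_FSlash by simp
next
  case (FLift a)
  then obtain m' where m: "m = Suc m'" by (cases m) auto
  show ?case using FLift.prems(1) unfolding m lams_Suc lang_pat_FLift by simp
next
  case (FS a)
  then obtain m' where m: "m = Suc m'" by (cases m) auto
  show ?case using FS.prems(1) unfolding m lams_Suc lang_pat_FS by simp
next
  case FShift
  then obtain m' where m: "m = Suc m'" by (cases m) auto
  show ?case using FShift.prems(1) unfolding m lams_Suc lang_pat_FShift by simp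
next
  case FZero
  then obtain m' where m: "m = Suc m'" by (cases m) auto
  show ?case using FZero.prems(1) unfolding m lams_Suc lang_pat_FZero by simp
qed

lemma lang_pat_lams: "x \<in> lang_pat P a \<Longrightarrow> (FLam ^^ d) x \<in> lang_pat P ((FLam ^^ d) a)"
  by (induction d) (auto simp: lang_pat_FLam)

lemma pure_lams: "pure ((FLam ^^ d) FZero)"
  by (induction d) auto

lemma set_lams: "set_ftree ((FLam ^^ d) (FV X)) = {X}"
  by (induction d) auto

lemma fsize_lams: "fsize ((FLam ^^ d) (FV X)) = d"
  by (induction d) auto

lemma unamb_disj:
  assumes "unambiguous P X" "(X,\<alpha>1) \<in> P" "(X,\<alpha>2) \<in> P" "\<alpha>1 \<noteq> \<alpha>2"
  shows "lang_pat P \<alpha>1 \<inter> lang_pat P \<alpha>2 = {}"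
proof (rule ccontr)
  assume "lang_pat P \<alpha>1 \<inter> lang_pat P \<alpha>2 \<noteq> {}"
  then obtain \<beta>1 \<beta>2 where b: "map_ftree dnt \<beta>1 = \<alpha>1" "\<forall>d\<in>set_ftree \<beta>1. wfd P d"
    "map_ftree dnt \<beta>2 = \<alpha>2" "\<forall>d\<in>set_ftree \<beta>2. wfd P d"
    "fjoin (map_ftree yld \<beta>1) = fjoin (map_ftree yld \<beta>2)"
    unfolding lang_pat_def by auto
  have w1: "wfd P (Drv X \<alpha>1 \<beta>1)" by (rule wfd.intros[OF assms(2) b(1,2)])
  have w2: "wfd P (Drv X \<alpha>2 \<beta>2)" by (rule wfd.intros[OF assms(3) b(3,4)])
  have "Drv X \<alpha>1 \<beta>1 = Drv X \<alpha>2 \<beta>2"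
    using assms(1) unfolding unambiguous_def
    by (rule inj_onD) (use w1 w2 b(5) in auto)
  then show False using assms(4) by simp
qed

locale ctx =
  fixes k :: nat and P :: "(nt \<times> nt ftree) set"
  assumes k1: "1 \<le> k" and U: "upsilon_grammar k P" and SG: "simple_grammar k P"
begin

lemma finP: "finite P" using U unfolding upsilon_grammar_def by blast
lemma LamP: "Lambda \<subseteq> P" using U unfolding upsilon_grammar_def by blast
lemma restr: "\<forall>(X,\<alpha>)\<in>P. X \<in> {NT,NS,NN} \<longrightarrow> (X,\<alpha>) \<in> Lambda" using U unfolding upsilon_grammar_def by blast
lemma langG: "j \<le> k \<Longrightarrow> lang P (NG j) = {t \<in> lterms. nf_in t j}" using U unfolding upsilon_grammar_def by blast
lemma unambG: "unambiguous P (NG k)" using U unfolding upsilon_grammar_def by blast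

lemma langT: "lang P NT = {t. isT t}" using lang_P_Lambda[OF LamP restr] lang_Lambda_NT by simp
lemma langS: "lang P NS = {t. isS t}" using lang_P_Lambda[OF LamP restr] lang_Lambda_NS by simp
lemma langN: "lang P NN = {t. isN t}" using lang_P_Lambda[OF LamP restr] lang_Lambda_NN by simp

lemma memG: "j \<le> k \<Longrightarrow> t \<in> lang P (NG j) \<longleftrightarrow> isT t \<and> nf_in t j"
  using langG lterms_iff by auto

definition "R = {\<alpha>. (NG k, \<alpha>) \<in> P}"

lemma finR: "finite R"
proof -
  have "R \<subseteq> snd ` P" unfolding R_def by force
  then show ?thesis using finP finite_subset by blast
qed

lemma langGk: "lang P (NG k) = (\<Union>\<alpha>\<in>R. lang_pat P \<alpha>)"
  unfolding R_def by (rule lang_union)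

lemma patG: "\<alpha> \<in> R \<Longrightarrow> t \<in> lang_pat P \<alpha> \<Longrightarrow> isT t \<and> nf_in t k"
  using langGk memG[of k] by auto

lemma no_pure: "\<alpha> \<in> R \<Longrightarrow> t \<in> lang_pat P \<alpha> \<Longrightarrow> pure t \<Longrightarrow> False"
  using patG pure_not_nf k1 by blast

abbreviation "A1 \<equiv> FLam (FV (NG k))"
abbreviation "A2 \<equiv> FApp (FV (NG 0)) (FV (NG k))"
abbreviation "A3 \<equiv> FApp (FV (NG k)) (FV (NG 0))"
abbreviation "Reg \<equiv> {NT, NS, NN} \<union> NG ` {..<k}"

lemma Rsub: "\<alpha> \<in> R \<Longrightarrow> \<alpha> \<in> {A1, A2, A3} \<union> Phi k P"
proof -
  assume a: "\<alpha> \<in> R"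
  then have p: "(NG k, \<alpha>) \<in> P" unfolding R_def by simp
  show ?thesis
  proof (cases "NG k \<in> set_ftree \<alpha>")
    case True
    then have "(NG k, \<alpha>) \<in> Lambda \<or> (\<exists>j. NG k = NG j \<and> \<alpha> \<in> {FLam (FV (NG j)), FApp (FV (NG 0)) (FV (NG j)),
                                   FApp (FV (NG j)) (FV (NG 0))})"
      using SG p unfolding simple_grammar_def by fast
    moreover have "(NG k, \<alpha>) \<notin> Lambda" using Lambda_vars by blast
    ultimately show ?thesis by auto
  next
    case False
    then show ?thesis using p unfolding Phi_def by auto
  qed
qed

lemma PhiR: "\<alpha> \<in> Phi k P \<Longrightarrow> \<alpha> \<in> R"
  unfolding Phi_def R_def by auto

lemma Phi_reg: "\<alpha> \<in> Phi k P \<Longrightarrow> set_ftree \<alpha> \<subseteq> Reg"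
proof -
  assume a: "\<alpha> \<in> Phi k P"
  then have p: "(NG k, \<alpha>) \<in> P" "NG k \<notin> set_ftree \<alpha>" unfolding Phi_def by auto
  then have "\<forall>j. NG k = NG j \<longrightarrow> set_ftree \<alpha> \<subseteq> {NT, NS, NN} \<union> NG ` {..<j}"
    using SG unfolding simple_grammar_def by fast
  then show ?thesis by blast
qed

lemma FZero_T: "FZero \<in> lang P NT" unfolding langT by (auto intro: isT_isS.intros isN.intros)
lemma FZero_N: "FZero \<in> lang P NN" unfolding langN by (auto intro: isN.intros)
lemma FShift_S: "FShift \<in> lang P NS" unfolding langS by (auto intro: isT_isS.intros)

lemma c_mem: "isT (shf j FZero)" "nf_in (shf j FZero :: nt ftree) j"
  using isT_shf nf_shf[of FZero j] by auto

lemma Phi_no_FV: "\<alpha> \<in> Phi k P \<Longrightarrow> \<alpha> = FV X \<Longrightarrow> False"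
proof -
  assume a: "\<alpha> \<in> Phi k P" "\<alpha> = FV X"
  have R: "\<alpha> \<in> R" using PhiR[OF a(1)] .
  have X: "X \<in> Reg" using Phi_reg[OF a(1)] a(2) by simp
  have sub: "lang P X \<subseteq> lang P (NG k)" using R a(2) langGk lang_pat_FV by blast
  from X consider "X = NT" | "X = NS" | "X = NN" | i where "i < k" "X = NG i" by blast
  then show False
  proof cases
    case 1 then show False using no_pure[OF R, of FZero] FZero_T a(2) lang_pat_FV by auto
  next
    case 2
    then have "FShift \<in> lang P (NG k)" using sub FShift_S by auto
    then have "isT FShift" using memG by auto
    then show False using isT_shape idx_shape by fastforce
  next
    case 3 then show False using no_pure[OF R, of FZero] FZero_N a(2) lang_pat_FV by auto
  next
    case (4 i)
    have "shf i FZero \<in> lang P (NG i)" using memG[of i] c_mem 4 by auto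
    then have "shf i FZero \<in> lang P (NG k)" using sub 4 by blast
    then have "nf_in (shf i FZero :: nt ftree) k" using memG[of k] by blast
    then show False using nf_det c_mem(2)[of i] 4 by fastforce
  qed
qed

lemma reg_lam:
  assumes "set_ftree \<alpha> \<subseteq> Reg" "(FLam ^^ m) c \<in> lang_pat P \<alpha>" "fsize \<alpha> < m" "nf_in c k"
  shows "\<exists>d. \<alpha> = (FLam ^^ d) (FV NT)"
proof -
  obtain d X where dx: "\<alpha> = (FLam ^^ d) (FV X)" "d < m" "(FLam ^^ (m - d)) c \<in> lang P X"
    using lam_depth[OF assms(2,3)] by blast
  obtain m' where m': "m - d = Suc m'" using dx(2) by (cases "m - d") auto
  define u where "u = (FLam ^^ (m - d)) c"
  have u: "u = FLam ((FLam ^^ m') c)" unfolding u_def m' by simp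
  have uX: "u \<in> lang P X" using dx(3) u_def by simp
  have unf: "nf_in u k" unfolding u_def nf_lams using assms(4) .
  have "X \<in> Reg" using assms(1) unfolding dx(1) set_lams by simp
  then consider "X = NT" | "X = NS" | "X = NN" | i where "i < k" "X = NG i" by blast
  then show ?thesis
  proof cases
    case 1 then show ?thesis using dx(1) by blast
  next
    case 2 then have "isS u" using uX langS by auto
    then show ?thesis using isS_shape u by auto
  next
    case 3 then have "isN u" using uX langN by auto
    then show ?thesis using isN_idx u by fastforce
  next
    case (4 i) then have "nf_in u i" using uX memG[of i] by auto
    then show ?thesis using nf_det unf 4 by fastforce
  qed
qed

definition "M = Max (fsize ` snd ` P)"

lemma fsize_le_M: "(X, \<alpha>) \<in> P \<Longrightarrow> fsize \<alpha> \<le> M"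
proof -
  assume a: "(X, \<alpha>) \<in> P"
  have "fsize \<alpha> \<in> fsize ` snd ` P" using a by (intro imageI) (rule image_eqI[of _ _ "(X,\<alpha>)"], simp_all)
  then show ?thesis unfolding M_def using finP by (intro Max_ge) simp_all
qed

abbreviation "cc \<equiv> (shf k FZero :: nt ftree)"

lemma A1_in: "A1 \<in> R"
proof (rule ccontr)
  assume nA: "A1 \<notin> R"
  define t where "t = (FLam ^^ Suc M) cc"
  have "isT t" unfolding t_def by (rule isT_lams[OF c_mem(1)])
  moreover have "nf_in t k" unfolding t_def nf_lams by (rule c_mem(2))
  ultimately have "t \<in> lang P (NG k)" using memG by auto
  then obtain \<alpha> where a: "\<alpha> \<in> R" "t \<in> lang_pat P \<alpha>" using langGk by auto
  have tL: "t = FLam ((FLam ^^ M) cc)" unfolding t_def by simp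
  from Rsub[OF a(1)] nA consider "\<alpha> = A2" | "\<alpha> = A3" | "\<alpha> \<in> Phi k P" using a(1) by auto
  then show False
  proof cases
    case 1 then show False using a(2) tL by (simp add: lang_pat_FApp)
  next
    case 2 then show False using a(2) tL by (simp add: lang_pat_FApp)
  next
    case 3
    have "fsize \<alpha> < Suc M" using fsize_le_M a(1) unfolding R_def by fastforce
    then obtain d where d: "\<alpha> = (FLam ^^ d) (FV NT)"
      using reg_lam[OF Phi_reg[OF 3] a(2)[unfolded t_def]] c_mem by blast
    have "(FLam ^^ d) FZero \<in> lang_pat P \<alpha>" unfolding d
      by (rule lang_pat_lams) (simp add: lang_pat_FV FZero_T)
    then show False using no_pure[OF a(1)] pure_lams by blast
  qed
qed

lemma A2_in: "A2 \<in> R"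
proof (rule ccontr)
  assume nA: "A2 \<notin> R"
  define t where "t = FApp FZero ((FLam ^^ Suc M) cc)"
  have "isT t" unfolding t_def by (intro isT_isS.intros isN.intros isT_lams[OF c_mem(1)])
  moreover have "nf_in t k" unfolding t_def
    by (rule nf_app_r) (simp, simp only: nf_lams c_mem)
  ultimately have "t \<in> lang P (NG k)" using memG by auto
  then obtain \<alpha> where a: "\<alpha> \<in> R" "t \<in> lang_pat P \<alpha>" using langGk by auto
  from Rsub[OF a(1)] nA consider "\<alpha> = A1" | "\<alpha> = A3" | "\<alpha> \<in> Phi k P" using a(1) by auto
  then show False
  proof cases
    case 1 then show False using a(2) t_def by (simp add: lang_pat_FLam)
  next
    case 2
    then have "FZero \<in> lang P (NG k)" using a(2) t_def by (simp add: lang_pat_FApp lang_pat_FV)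
    then have "nf_in (FZero :: nt ftree) k" using memG[of k] by blast
    then show False using pure_not_nf[of "FZero :: nt ftree" k] k1 by simp
  next
    case 3
    have fs: "fsize \<alpha> \<le> M" using fsize_le_M a(1) unfolding R_def by fastforce
    have "\<exists>a1 a2. \<alpha> = FApp a1 a2"
      using a(2) Phi_no_FV[OF 3] unfolding t_def
      by (cases \<alpha>) (auto simp: lang_pat_FClos lang_pat_FLam lang_pat_FSlash lang_pat_FLift lang_pat_FS
          lang_pat_FShift lang_pat_FZero)
    then obtain a1 a2 where al: "\<alpha> = FApp a1 a2" by blast
    have m1: "FZero \<in> lang_pat P a1" and m2: "(FLam ^^ Suc M) cc \<in> lang_pat P a2"
      using a(2) unfolding al t_def lang_pat_FApp by auto
    have "set_ftree a2 \<subseteq> Reg" using Phi_reg[OF 3] al by auto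
    moreover have "fsize a2 < Suc M" using fs al by simp
    ultimately obtain d where d: "a2 = (FLam ^^ d) (FV NT)"
      using reg_lam m2 c_mem by blast
    have "(FLam ^^ d) FZero \<in> lang_pat P a2" unfolding d
      by (rule lang_pat_lams) (simp add: lang_pat_FV FZero_T)
    then have "FApp FZero ((FLam ^^ d) FZero) \<in> lang_pat P \<alpha>" using m1 al lang_pat_FApp by blast
    then show False using no_pure[OF a(1)] pure_lams by fastforce
  qed
qed

lemma A3_in: "A3 \<in> R"
proof (rule ccontr)
  assume nA: "A3 \<notin> R"
  define t where "t = FApp ((FLam ^^ Suc M) cc) FZero"
  have "isT t" unfolding t_def by (intro isT_isS.intros isN.intros isT_lams[OF c_mem(1)])
  moreover have "nf_in t k" unfolding t_def
    by (rule nf_app_l) (simp only: nf_lams c_mem, simp)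
  ultimately have "t \<in> lang P (NG k)" using memG by auto
  then obtain \<alpha> where a: "\<alpha> \<in> R" "t \<in> lang_pat P \<alpha>" using langGk by auto
  from Rsub[OF a(1)] nA consider "\<alpha> = A1" | "\<alpha> = A2" | "\<alpha> \<in> Phi k P" using a(1) by auto
  then show False
  proof cases
    case 1 then show False using a(2) t_def by (simp add: lang_pat_FLam)
  next
    case 2
    then have "(FLam ^^ Suc M) cc \<in> lang P (NG 0)" using a(2) t_def by (simp add: lang_pat_FApp lang_pat_FV)
    then have "nf_in ((FLam ^^ Suc M) cc) 0" using memG by auto
    moreover have "nf_in ((FLam ^^ Suc M) cc) k" by (simp only: nf_lams c_mem)
    ultimately show False using nf_det k1 by fastforce
  next
    case 3
    have fs: "fsize \<alpha> \<le> M" using fsize_le_M a(1) unfolding R_def by fastforce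
    have "\<exists>a1 a2. \<alpha> = FApp a1 a2"
      using a(2) Phi_no_FV[OF 3] unfolding t_def
      by (cases \<alpha>) (auto simp: lang_pat_FClos lang_pat_FLam lang_pat_FSlash lang_pat_FLift lang_pat_FS
          lang_pat_FShift lang_pat_FZero)
    then obtain a1 a2 where al: "\<alpha> = FApp a1 a2" by blast
    have m1: "(FLam ^^ Suc M) cc \<in> lang_pat P a1" and m2: "FZero \<in> lang_pat P a2"
      using a(2) unfolding al t_def lang_pat_FApp by auto
    have "set_ftree a1 \<subseteq> Reg" using Phi_reg[OF 3] al by auto
    moreover have "fsize a1 < Suc M" using fs al by simp
    ultimately obtain d where d: "a1 = (FLam ^^ d) (FV NT)"
      using reg_lam m1 c_mem by blast
    have "(FLam ^^ d) FZero \<in> lang_pat P a1" unfolding d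
      by (rule lang_pat_lams) (simp add: lang_pat_FV FZero_T)
    then have "FApp ((FLam ^^ d) FZero) FZero \<in> lang_pat P \<alpha>" using m2 al lang_pat_FApp by blast
    then show False using no_pure[OF a(1)] pure_lams by fastforce
  qed
qed

end



context ctx begin

lemma gfG: "j \<le> k \<Longrightarrow> gf (lang P (NG j)) = Gi j"
  unfolding Gi_def using langG by simp

lemma gfT: "gf (lang P NT) = GfT"
  unfolding GfT_def lterms_def using lang_P_Lambda[OF LamP restr] by simp
lemma gfS: "gf (lang P NS) = GfS"
  unfolding GfS_def using lang_P_Lambda[OF LamP restr] by simp
lemma gfN: "gf (lang P NN) = GfN"
  unfolding GfN_def using lang_P_Lambda[OF LamP restr] by simp

lemma part1: "\<gamma> \<in> Phi k P \<Longrightarrow> \<exists>\<zeta> \<tau> \<sigma> \<nu> (\<rho> :: nat \<Rightarrow> nat).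
            gf (lang_pat P \<gamma>) =
              fps_X ^ \<zeta> * GfT ^ \<tau> * GfS ^ \<sigma> * GfN ^ \<nu> * (\<Prod>i<k. Gi i ^ \<rho> i)"
  unfolding gf_lang_pat
  by (rule pgf_mono[OF Phi_reg]) (auto simp: gfT gfS gfN gfG)

lemma Rdecomp: "R = {A1, A2, A3} \<union> Phi k P"
  using Rsub A1_in A2_in A3_in PhiR by blast

lemma main_eq: "Gi k = fps_X * Gi k + fps_X * Linf * Gi k + fps_X * Gi k * Linf + (\<Sum>\<gamma>\<in>Phi k P. gf (lang_pat P \<gamma>))"
proof -
  have "Gi k = gf (\<Union>\<alpha>\<in>R. lang_pat P \<alpha>)" using gfG[of k] langGk by simp
  also have "\<dots> = (\<Sum>\<alpha>\<in>R. gf (lang_pat P \<alpha>))"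
    by (rule gf_union) (use finR unamb_disj[OF unambG] gfin_lang_pat in \<open>auto simp: R_def\<close>)
  also have "\<dots> = (\<Sum>\<alpha>\<in>{A1, A2, A3}. gf (lang_pat P \<alpha>)) + (\<Sum>\<gamma>\<in>Phi k P. gf (lang_pat P \<gamma>))"
    unfolding Rdecomp
    by (rule sum.union_disjoint) (use finR PhiR in \<open>auto simp: Phi_def intro: finite_subset\<close>)
  also have "(\<Sum>\<alpha>\<in>{A1, A2, A3}. gf (lang_pat P \<alpha>)) = gf (lang_pat P A1) + gf (lang_pat P A2) + gf (lang_pat P A3)"
    using k1 by simp
  also have "gf (lang_pat P A1) = fps_X * Gi k" unfolding gf_lang_pat by (simp add: gfG)
  also have "gf (lang_pat P A2) = fps_X * Linf * Gi k" unfolding gf_lang_pat by (simp add: gfG Gi0_Linf)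
  also have "gf (lang_pat P A3) = fps_X * Gi k * Linf" unfolding gf_lang_pat by (simp add: gfG Gi0_Linf)
  finally show ?thesis .
qed

lemma part2: "Gi k = inverse (1 - fps_X - 2 * fps_X * Linf) * (\<Sum>\<gamma>\<in>Phi k P. gf (lang_pat P \<gamma>))"
proof -
  define D :: "real fps" where "D = 1 - fps_X - 2 * fps_X * Linf"
  define S where "S = (\<Sum>\<gamma>\<in>Phi k P. gf (lang_pat P \<gamma>))"
  have e: "Gi k = fps_X * Gi k + fps_X * Linf * Gi k + fps_X * Gi k * Linf + S"
    using main_eq unfolding S_def .
  have DS: "D * Gi k = S"
  proof -
    have "D * Gi k = Gi k - (fps_X * Gi k + fps_X * Linf * Gi k + fps_X * Gi k * Linf)"
      unfolding D_def by (simp add: algebra_simps)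
    also have "\<dots> = S" using e by (simp add: algebra_simps)
    finally show ?thesis .
  qed
  have D0: "fps_nth D 0 \<noteq> 0" unfolding D_def by simp
  have "Gi k = (inverse D * D) * Gi k" using inverse_mult_eq_1[OF D0] by simp
  also have "\<dots> = inverse D * S" using DS by (simp add: mult.assoc)
  finally show ?thesis unfolding D_def S_def .
qed

end

theorem mainTheorem3:
  fixes k :: nat and P :: "(nt \<times> nt ftree) set"
  assumes "1 \<le> k" and "upsilon_grammar k P" and "simple_grammar k P"
  shows "(\<forall>\<gamma>\<in>Phi k P. \<exists>\<zeta> \<tau> \<sigma> \<nu> (\<rho> :: nat \<Rightarrow> nat).
            gf (lang_pat P \<gamma>) =
              fps_X ^ \<zeta> * GfT ^ \<tau> * GfS ^ \<sigma> * GfN ^ \<nu> * (\<Prod>i<k. Gi i ^ \<rho> i))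
       \<and> Gi k = inverse (1 - fps_X - 2 * fps_X * Linf) * (\<Sum>\<gamma>\<in>Phi k P. gf (lang_pat P \<gamma>))"
proof -
  interpret ctx k P using assms by unfold_locales
  show ?thesis using part1 part2 by blast
qed


end
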